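(* Let $X$ and $Y$ be 2-dimensional non-positively curved piecewise Euclidean complexes and let $Z$ be a 1-dimensional complex which is a subcomplex of both $X$ and $Y$. If $Z$ is ultra-convex in $X$ (or in $Y$), then the space $X\sqcup_Z Y$ obtained by gluing $X$ and $Y$ along $Z$ is also a 2-dimensional non-positively curved complex.
   Context: A 2-dimensional piecewise Euclidean complex is non-positively curved if the link of every vertex contains no closed loop of length less than $2\pi$ (in the angular metric). For a non-positively curved piecewise Euclidean 2-complex $X$ and a 1-dimensional subcomplex $Y$, $Y$ is ultra-convex in $X$ if for every vertex $v\in Y$, any two points of $\mathrm{Lk}(v,Y)$ are at distance at least $2\pi$ in $\mathrm{Lk}(v,X)$. *)

theory Defs
  imports "HOL-Analysis.Analysis"
begin

text \<open>
  Every face is a convex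
  Euclidean polygon (given by its corner points in the complex plane, listed
  counterclockwise), attached along a closed edge path: side k of the polygon
  goes from corner k to corner k+1 and is glued isometrically to the oriented
  edge  bdry f ! k  (True = traversed from src to tgt).
\<close>

record ('v,'e,'f) pe2 =
  verts :: "'v set"
  edges :: "'e set"
  faces :: "'f set"
  src   :: "'e \<Rightarrow> 'v"
  tgt   :: "'e \<Rightarrow> 'v"
  len   :: "'e \<Rightarrow> real"
  bdry  :: "'f \<Rightarrow> ('e \<times> bool) list"
  shape :: "'f \<Rightarrow> complex list"

definition otail :: "('v,'e,'f,'z) pe2_scheme \<Rightarrow> 'e \<times> bool \<Rightarrow> 'v" where
  "otail X s = (if snd s then src X (fst s) else tgt X (fst s))"

definition ohead :: "('v,'e,'f,'z) pe2_scheme \<Rightarrow> 'e \<times> bool \<Rightarrow> 'v" where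
  "ohead X s = (if snd s then tgt X (fst s) else src X (fst s))"

definition turn :: "complex list \<Rightarrow> nat \<Rightarrow> real" where
  "turn ps k = (let n = length ps in
     Arg ((ps ! (Suc k mod n) - ps ! k) / (ps ! k - ps ! ((k + n - 1) mod n))))"

definition convex_polygon :: "complex list \<Rightarrow> bool" where
  "convex_polygon ps \<longleftrightarrow> length ps \<ge> 3 \<and>
     (\<forall>k < length ps. 0 < turn ps k \<and> turn ps k < pi) \<and>
     (\<Sum>k < length ps. turn ps k) = 2 * pi"

definition corner_angle :: "('v,'e,'f,'z) pe2_scheme \<Rightarrow> 'f \<Rightarrow> nat \<Rightarrow> real" where
  "corner_angle X f k = pi - turn (shape X f) k"

definition pe2_complex :: "('v,'e,'f,'z) pe2_scheme \<Rightarrow> bool" where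
  "pe2_complex X \<longleftrightarrow>
     faces X \<noteq> {} \<and>
     (\<forall>e \<in> edges X. src X e \<in> verts X \<and> tgt X e \<in> verts X \<and> len X e > 0) \<and>
     (\<forall>f \<in> faces X. let bs = bdry X f; ps = shape X f; n = length bs in
        length ps = n \<and> convex_polygon ps \<and>
        (\<forall>k < n. fst (bs ! k) \<in> edges X \<and>
                 ohead X (bs ! k) = otail X (bs ! (Suc k mod n)) \<and>
                 cmod (ps ! (Suc k mod n) - ps ! k) = len X (fst (bs ! k))))"

text \<open>Its vertices are the edge-ends
  at v (e, True) = source end, (e, False) = target end; its edges are the
  corners (f, k) of faces at v, of length the corner angle.\<close>

definition link_verts :: "('v,'e,'f,'z) pe2_scheme \<Rightarrow> 'v \<Rightarrow> ('e \<times> bool) set" where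
  "link_verts X v = {(e, b). e \<in> edges X \<and> (if b then src X e else tgt X e) = v}"

definition link_edges :: "('v,'e,'f,'z) pe2_scheme \<Rightarrow> 'v \<Rightarrow> ('f \<times> nat) set" where
  "link_edges X v = {(f, k). f \<in> faces X \<and> k < length (bdry X f) \<and> otail X (bdry X f ! k) = v}"

text \<open>The two endpoints of the link edge (f,k): the end of the arriving side k-1
  and the end of the departing side k.\<close>
definition link_ends :: "('v,'e,'f,'z) pe2_scheme \<Rightarrow> 'f \<times> nat \<Rightarrow> ('e \<times> bool) \<times> ('e \<times> bool)" where
  "link_ends X c = (case c of (f, k) \<Rightarrow>
     (let bs = bdry X f; n = length bs; a = bs ! ((k + n - 1) mod n) in
       ((fst a, \<not> snd a), bs ! k)))"

definition link_len :: "('v,'e,'f,'z) pe2_scheme \<Rightarrow> 'f \<times> nat \<Rightarrow> real" where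
  "link_len X c = (case c of (f, k) \<Rightarrow> corner_angle X f k)"

definition joins :: "('v,'e,'f,'z) pe2_scheme \<Rightarrow> 'f \<times> nat \<Rightarrow> 'e \<times> bool \<Rightarrow> 'e \<times> bool \<Rightarrow> bool" where
  "joins X c x y \<longleftrightarrow> link_ends X c = (x, y) \<or> link_ends X c = (y, x)"

definition link_walk :: "('v,'e,'f,'z) pe2_scheme \<Rightarrow> 'v \<Rightarrow> ('e \<times> bool) list \<Rightarrow> ('f \<times> nat) list \<Rightarrow> bool" where
  "link_walk X v ws cs \<longleftrightarrow> length ws = Suc (length cs) \<and>
     set ws \<subseteq> link_verts X v \<and> set cs \<subseteq> link_edges X v \<and>
     (\<forall>i < length cs. joins X (cs ! i) (ws ! i) (ws ! Suc i))"

definition link_cycle :: "('v,'e,'f,'z) pe2_scheme \<Rightarrow> 'v \<Rightarrow> ('e \<times> bool) list \<Rightarrow> ('f \<times> nat) list \<Rightarrow> bool" where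
  "link_cycle X v ws cs \<longleftrightarrow> cs \<noteq> [] \<and> length ws = length cs \<and>
     distinct ws \<and> distinct cs \<and>
     set ws \<subseteq> link_verts X v \<and> set cs \<subseteq> link_edges X v \<and>
     (\<forall>i < length cs. joins X (cs ! i) (ws ! i) (ws ! (Suc i mod length cs)))"

definition link_length :: "('v,'e,'f,'z) pe2_scheme \<Rightarrow> ('f \<times> nat) list \<Rightarrow> real" where
  "link_length X cs = sum_list (map (link_len X) cs)"

definition npc :: "('v,'e,'f,'z) pe2_scheme \<Rightarrow> bool" where
  "npc X \<longleftrightarrow> pe2_complex X \<and>
     (\<forall>v \<in> verts X. \<forall>ws cs. link_cycle X v ws cs \<longrightarrow> link_length X cs \<ge> 2 * pi)"

definition subcomplex1 :: "('v,'e,'f,'z) pe2_scheme \<Rightarrow> 'v set \<Rightarrow> 'e set \<Rightarrow> bool" where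
  "subcomplex1 X ZV ZE \<longleftrightarrow> ZV \<subseteq> verts X \<and> ZE \<subseteq> edges X \<and>
     (\<forall>e \<in> ZE. src X e \<in> ZV \<and> tgt X e \<in> ZV)"

definition sub_link :: "('v,'e,'f,'z) pe2_scheme \<Rightarrow> 'e set \<Rightarrow> 'v \<Rightarrow> ('e \<times> bool) set" where
  "sub_link X ZE v = {(e, b). e \<in> ZE \<and> (if b then src X e else tgt X e) = v}"

text \<open>Ultra-convexity: distinct points of Lk(v,Z) are at distance at least 2 pi
  in the path metric of Lk(v,X), i.e. every link walk joining them has length
  at least 2 pi.\<close>
definition ultra_convex :: "('v,'e,'f,'z) pe2_scheme \<Rightarrow> 'v set \<Rightarrow> 'e set \<Rightarrow> bool" where
  "ultra_convex X ZV ZE \<longleftrightarrow>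
     (\<forall>v \<in> ZV. \<forall>a \<in> sub_link X ZE v. \<forall>b \<in> sub_link X ZE v. a \<noteq> b \<longrightarrow>
        (\<forall>ws cs. link_walk X v ws cs \<and> hd ws = a \<and> last ws = b \<longrightarrow> link_length X cs \<ge> 2 * pi))"

text \<open>Gluing: X and Y are taken to intersect exactly in the common subcomplex Z
  (with compatible data there); the glued complex is then the union.\<close>
definition glue :: "('v,'e,'f) pe2 \<Rightarrow> ('v,'e,'f) pe2 \<Rightarrow> ('v,'e,'f) pe2" where
  "glue X Y = \<lparr> verts = verts X \<union> verts Y,
                edges = edges X \<union> edges Y,
                faces = faces X \<union> faces Y,
                src = (\<lambda>e. if e \<in> edges X then src X e else src Y e),
                tgt = (\<lambda>e. if e \<in> edges X then tgt X e else tgt Y e),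
                len = (\<lambda>e. if e \<in> edges X then len X e else len Y e),
                bdry = (\<lambda>f. if f \<in> faces X then bdry X f else bdry Y f),
                shape = (\<lambda>f. if f \<in> faces X then shape X f else shape Y f) \<rparr>"

end

theory Submission
  imports Defs
begin

lemma corner_pos:
  assumes "pe2_complex A" "f \<in> faces A" "k < length (bdry A f)"
  shows "corner_angle A f k > 0"
proof -
  have "length (shape A f) = length (bdry A f)" "convex_polygon (shape A f)"
    using assms unfolding pe2_complex_def Let_def by auto
  then have "turn (shape A f) k < pi" using assms(3) unfolding convex_polygon_def by auto
  then show ?thesis unfolding corner_angle_def by simp
qed

lemma bdry_edge:
  assumes "pe2_complex A" "f \<in> faces A" "k < length (bdry A f)"
  shows "fst (bdry A f ! k) \<in> edges A"
  using assms unfolding pe2_complex_def Let_def by auto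

lemma L1:
  fixes G A :: "('v,'e,'f) pe2"
  assumes pA: "pe2_complex A"
    and fA: "\<forall>f\<in>faces A. bdry G f = bdry A f \<and> shape G f = shape A f"
    and eA: "\<forall>e\<in>edges A. src G e = src A e \<and> tgt G e = tgt A e"
    and c: "c \<in> link_edges G v" and cA: "fst c \<in> faces A"
  shows "c \<in> link_edges A v" "link_len G c = link_len A c" "link_ends G c = link_ends A c"
    "fst (fst (link_ends A c)) \<in> edges A" "fst (snd (link_ends A c)) \<in> edges A"
    "link_len A c > 0"
proof -
  obtain f k where ck: "c = (f,k)" by (cases c)
  have f: "f \<in> faces A" using cA ck by simp
  have k: "k < length (bdry A f)" and ot: "otail G (bdry A f ! k) = v"
    using c ck fA f unfolding link_edges_def by auto
  have ek: "fst (bdry A f ! k) \<in> edges A" using bdry_edge[OF pA f k] .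
  show "c \<in> link_edges A v" using ot ek eA f k ck unfolding link_edges_def otail_def by auto
  show "link_len G c = link_len A c" using ck fA f unfolding link_len_def corner_angle_def by auto
  show "link_ends G c = link_ends A c" using ck fA f unfolding link_ends_def by auto
  let ?n = "length (bdry A f)"
  have "?n > 0" using k by linarith
  then have "(k + ?n - 1) mod ?n < ?n" by (meson mod_less_divisor)
  then have "fst (bdry A f ! ((k + ?n - 1) mod ?n)) \<in> edges A" using bdry_edge[OF pA f] by blast
  then show "fst (fst (link_ends A c)) \<in> edges A" "fst (snd (link_ends A c)) \<in> edges A"
    using ck ek unfolding link_ends_def Let_def by auto
  show "link_len A c > 0" using corner_pos[OF pA f k] ck unfolding link_len_def by simp
qed

lemma joins_edges:
  fixes G A :: "('v,'e,'f) pe2"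
  assumes pA: "pe2_complex A"
    and fA: "\<forall>f\<in>faces A. bdry G f = bdry A f \<and> shape G f = shape A f"
    and eA: "\<forall>e\<in>edges A. src G e = src A e \<and> tgt G e = tgt A e"
    and c: "c \<in> link_edges G v" and cA: "fst c \<in> faces A"
    and j: "joins G c x y"
  shows "fst x \<in> edges A" "fst y \<in> edges A"
  using L1[OF pA fA eA c cA] j unfolding joins_def by (metis fst_conv snd_conv)+

lemma L2:
  fixes G A :: "('v,'e,'f) pe2"
  assumes eA: "\<forall>e\<in>edges A. src G e = src A e \<and> tgt G e = tgt A e"
    and "x \<in> link_verts G v" "fst x \<in> edges A"
  shows "x \<in> link_verts A v"
  using assms unfolding link_verts_def by (cases x) auto

lemma inj_F: "inj_on (\<lambda>t. (a + t) mod (n::nat)) {..<n}"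
proof -
  have "x = y" if "x < n" "y < n" "(a + x) mod n = (a + y) mod n" "x \<le> y" for x y
  proof -
    have "n dvd (a + y) - (a + x)" using that mod_eq_dvd_iff_nat[of "a + x" "a + y" n] by simp
    then have "n dvd y - x" by simp
    moreover have "y - x < n" using that by simp
    ultimately have "y - x = 0" using nat_dvd_not_less by blast
    then show ?thesis using that by simp
  qed
  note H = this
  show ?thesis unfolding inj_on_def
  proof (intro ballI impI)
    fix x y assume "x \<in> {..<n}" "y \<in> {..<n}" "(a + x) mod n = (a + y) mod n"
    then show "x = y" using H[of x y] H[of y x] by (cases "x \<le> y") auto
  qed
qed

lemma key:
  fixes G A B :: "('v,'e,'f) pe2"
  assumes pA: "pe2_complex A" and pB: "pe2_complex B"
    and fA: "\<forall>f\<in>faces A. bdry G f = bdry A f \<and> shape G f = shape A f"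
    and eA: "\<forall>e\<in>edges A. src G e = src A e \<and> tgt G e = tgt A e"
    and fB: "\<forall>f\<in>faces B. bdry G f = bdry B f \<and> shape G f = shape B f"
    and eB: "\<forall>e\<in>edges B. src G e = src B e \<and> tgt G e = tgt B e"
    and sub: "subcomplex1 A ZV ZE"
    and eAB: "edges A \<inter> edges B = ZE"
    and fG: "faces G = faces A \<union> faces B"
    and disj: "faces A \<inter> faces B = {}"
    and uc: "ultra_convex A ZV ZE"
    and cyc: "link_cycle G v ws cs"
    and mA: "\<exists>c\<in>set cs. fst c \<in> faces A" and mB: "\<exists>c\<in>set cs. fst c \<in> faces B"
  shows "2*pi \<le> link_length G cs"
proof -
  define n where "n = length cs"
  have n0: "n > 0" using cyc unfolding link_cycle_def n_def by simp
  have lw: "length ws = n" and dws: "distinct ws" and wsG: "set ws \<subseteq> link_verts G v"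
    and csG: "set cs \<subseteq> link_edges G v"
    and jn: "\<forall>i<n. joins G (cs ! i) (ws ! i) (ws ! (Suc i mod n))"
    using cyc unfolding link_cycle_def n_def by auto
  from mB obtain j where j: "j < n" "fst (cs ! j) \<in> faces B"
    by (metis in_set_conv_nth n_def)
  define F where "F t = (Suc j + t) mod n" for t
  define C where "C t = cs ! F t" for t
  define W where "W t = ws ! F t" for t
  define Q where "Q t \<longleftrightarrow> fst (C t) \<in> faces A" for t
  have Fn: "F t < n" for t using n0 unfolding F_def by simp
  have injF: "inj_on F {..<n}" unfolding F_def by (rule inj_F)
  have surjF: "F ` {..<n} = {..<n}"
    by (rule endo_inj_surj) (use Fn injF in auto)
  have CG: "C t \<in> link_edges G v" for t using csG Fn n_def unfolding C_def by auto
  have WG: "W t \<in> link_verts G v" for t using wsG Fn lw unfolding W_def by auto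
  have CAB: "fst (C t) \<in> faces A \<union> faces B" for t
    using CG[of t] fG unfolding link_edges_def by auto
  have jC: "joins G (C t) (W t) (W (Suc t))" for t
  proof -
    have "Suc (F t) mod n = F (Suc t)" unfolding F_def by (simp add: mod_Suc_eq)
    then show ?thesis using jn Fn unfolding C_def W_def by metis
  qed
  have Fl: "F (n - 1) = j" unfolding F_def using j n0 by simp
  have Fn': "F n = F 0" unfolding F_def by (simp only: mod_add_self2 add_0_right)
  have nQ: "\<not> Q (n - 1)" using Fl j disj unfolding Q_def C_def by auto
  have nQB: "fst (C t) \<in> faces B" if "\<not> Q t" for t using that CAB unfolding Q_def by auto
  have exQ: "\<exists>t<n. Q t"
  proof -
    from mA obtain i where "i < n" "fst (cs ! i) \<in> faces A" by (metis in_set_conv_nth n_def)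
    moreover then obtain t where "t < n" "F t = i" using surjF by (metis imageE lessThan_iff)
    ultimately show ?thesis unfolding Q_def C_def by auto
  qed
  define t0 where "t0 = (LEAST t. Q t)"
  have Qt0: "Q t0" unfolding t0_def using exQ by (metis LeastI)
  have t0n: "t0 < n - 1"
  proof -
    from exQ obtain t where "t < n" "Q t" by auto
    then have "t0 \<le> t" unfolding t0_def by (simp add: Least_le)
    moreover have "t0 \<noteq> n - 1" using Qt0 nQ by auto
    ultimately show ?thesis using \<open>t < n\<close> by linarith
  qed
  define t1 where "t1 = (LEAST t. t0 < t \<and> \<not> Q t)"
  have ex1: "t0 < n - 1 \<and> \<not> Q (n - 1)" using t0n nQ by simp
  have t1p: "t0 < t1 \<and> \<not> Q t1" unfolding t1_def using ex1 by (rule LeastI)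
  have t1n: "t1 \<le> n - 1" unfolding t1_def using ex1 by (rule Least_le)
  have Qmid: "Q t" if "t0 \<le> t" "t < t1" for t
  proof (cases "t = t0")
    case True then show ?thesis using Qt0 by simp
  next
    case False
    then have "t0 < t" using that by simp
    then show ?thesis using not_less_Least[of t "\<lambda>t. t0 < t \<and> \<not> Q t"] that(2)
      unfolding t1_def by blast
  qed
  define ws' where "ws' = map W [t0..<Suc t1]"
  define cs' where "cs' = map C [t0..<t1]"
  have WA: "fst (W t) \<in> edges A" if "t0 \<le> t" "t \<le> t1" for t
  proof (cases "t < t1")
    case True
    then show ?thesis using joins_edges(1)[OF pA fA eA CG _ jC] Qmid that unfolding Q_def by blast
  next
    case False
    then have "t = Suc (t1 - 1)" "Q (t1 - 1)" using that t1p Qmid by auto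
    then show ?thesis using joins_edges(2)[OF pA fA eA CG _ jC, of "t1 - 1"] unfolding Q_def by metis
  qed
  have walk: "link_walk A v ws' cs'"
    unfolding link_walk_def
  proof (intro conjI allI impI)
    show "length ws' = Suc (length cs')" unfolding ws'_def cs'_def using t1p by simp
    show "set ws' \<subseteq> link_verts A v" unfolding ws'_def
      using L2[OF eA WG WA] by auto
    show "set cs' \<subseteq> link_edges A v" unfolding cs'_def
      using L1(1)[OF pA fA eA CG] Qmid unfolding Q_def by auto
    fix i assume "i < length cs'"
    then have i: "t0 + i < t1" unfolding cs'_def by simp
    have "joins G (C (t0 + i)) (W (t0 + i)) (W (Suc (t0 + i)))" by (rule jC)
    then have "joins A (C (t0 + i)) (W (t0 + i)) (W (Suc (t0 + i)))"
      using L1(3)[OF pA fA eA CG, of "t0 + i"] Qmid[of "t0 + i"] i unfolding Q_def joins_def by simp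
    moreover have "cs' ! i = C (t0 + i)" "ws' ! i = W (t0 + i)" "ws' ! Suc i = W (Suc (t0 + i))"
      using i by (simp_all add: cs'_def ws'_def del: upt_Suc)
    ultimately show "joins A (cs' ! i) (ws' ! i) (ws' ! Suc i)" by simp
  qed
  have hd: "hd ws' = W t0" unfolding ws'_def using t1p by (simp add: hd_map)
  have lst: "last ws' = W t1" unfolding ws'_def using t1p by (simp add: last_map)
  have neq: "W t0 \<noteq> W t1"
  proof
    assume "W t0 = W t1"
    then have "F t0 = F t1" using dws Fn lw nth_eq_iff_index_eq unfolding W_def by metis
    then have "t0 = t1" using injF t0n t1n n0 by (simp add: inj_on_def)
    then show False using t1p by simp
  qed
  have insub: "W t \<in> sub_link A ZE v" "v \<in> ZV"
    if "fst (W t) \<in> edges A" "fst (W t) \<in> edges B" for t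
  proof -
    obtain e b where eb: "W t = (e, b)" by (cases "W t")
    have e: "e \<in> ZE" using that eAB eb by auto
    have "(if b then src G e else tgt G e) = v" using WG[of t] eb unfolding link_verts_def by auto
    then have "(if b then src A e else tgt A e) = v" using eA that eb by auto
    then show "W t \<in> sub_link A ZE v" using e eb unfolding sub_link_def by auto
    show "v \<in> ZV" using sub e \<open>(if b then src A e else tgt A e) = v\<close>
      unfolding subcomplex1_def by (auto split: if_splits)
  qed
  have B0: "fst (W t0) \<in> edges B"
  proof -
    define p where "p = (if t0 = 0 then n - 1 else t0 - 1)"
    have "\<not> Q p"
    proof (cases "t0 = 0")
      case True then show ?thesis using nQ p_def by simp
    next
      case False
      then have "t0 - 1 < t0" by simp
      then have "\<not> Q (t0 - 1)" using not_less_Least[of "t0 - 1" Q] unfolding t0_def by blast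
      then show ?thesis using False p_def by simp
    qed
    moreover have "W (Suc p) = W t0"
      using Fn' n0 unfolding p_def W_def by (cases "t0 = 0") auto
    ultimately show ?thesis using joins_edges(2)[OF pB fB eB CG nQB jC, of p] by metis
  qed
  have B1: "fst (W t1) \<in> edges B"
    using joins_edges(1)[OF pB fB eB CG nQB jC, of t1] t1p by metis
  have s0: "W t0 \<in> sub_link A ZE v" and vZ: "v \<in> ZV"
    using insub[of t0] WA[of t0] B0 t1p by auto
  have s1: "W t1 \<in> sub_link A ZE v"
    using insub[of t1] WA[of t1] B1 t1p by auto
  have ge: "2 * pi \<le> link_length A cs'"
    using uc vZ s0 s1 neq walk hd lst unfolding ultra_convex_def by blast
  have nonneg: "0 \<le> link_len G c" if "c \<in> link_edges G v" for c
  proof -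
    have "fst c \<in> faces A \<union> faces B" using that fG unfolding link_edges_def by auto
    then show ?thesis using L1(2,6)[OF pA fA eA that] L1(2,6)[OF pB fB eB that] by fastforce
  qed
  have "link_length A cs' = (\<Sum>t\<in>{t0..<t1}. link_len A (C t))"
    unfolding link_length_def cs'_def map_map by (simp only: interv_sum_list_conv_sum_set_nat set_upt comp_def)
  also have "\<dots> = (\<Sum>t\<in>{t0..<t1}. link_len G (cs ! F t))"
    using L1(2)[OF pA fA eA CG] Qmid unfolding Q_def C_def by (intro sum.cong) auto
  also have "\<dots> = (\<Sum>i\<in>F ` {t0..<t1}. link_len G (cs ! i))"
  proof -
    have "{t0..<t1} \<subseteq> {..<n}" using t1n n0 by auto
    then have "inj_on F {t0..<t1}" using injF inj_on_subset by blast
    then show ?thesis by (simp add: sum.reindex)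
  qed
  also have "\<dots> \<le> (\<Sum>i\<in>{..<n}. link_len G (cs ! i))"
  proof (rule sum_mono2)
    show "F ` {t0..<t1} \<subseteq> {..<n}" using Fn by auto
    fix i assume "i \<in> {..<n} - F ` {t0..<t1}"
    then have "cs ! i \<in> link_edges G v" using csG n_def by auto
    then show "0 \<le> link_len G (cs ! i)" by (rule nonneg)
  qed simp
  also have "\<dots> = link_length G cs"
    unfolding link_length_def n_def by (simp add: sum_list_sum_nth atLeast0LessThan)
  finally show ?thesis using ge by simp
qed

lemma restrict:
  fixes G A :: "('v,'e,'f) pe2"
  assumes pA: "pe2_complex A"
    and fA: "\<forall>f\<in>faces A. bdry G f = bdry A f \<and> shape G f = shape A f"
    and eA: "\<forall>e\<in>edges A. src G e = src A e \<and> tgt G e = tgt A e"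
    and cyc: "link_cycle G v ws cs" and all: "\<forall>c\<in>set cs. fst c \<in> faces A"
  shows "link_cycle A v ws cs" "link_length G cs = link_length A cs" "v \<in> verts A"
proof -
  define n where "n = length cs"
  have n0: "n > 0" using cyc unfolding link_cycle_def n_def by simp
  have lw: "length ws = n" and wsG: "set ws \<subseteq> link_verts G v"
    and csG: "set cs \<subseteq> link_edges G v"
    and jn: "\<forall>i<n. joins G (cs ! i) (ws ! i) (ws ! (Suc i mod n))"
    using cyc unfolding link_cycle_def n_def by auto
  have cG: "cs ! i \<in> link_edges G v" "fst (cs ! i) \<in> faces A" if "i < n" for i
    using that csG all n_def by auto
  have "fst (ws ! i) \<in> edges A" if "i < n" for i
    using joins_edges(1)[OF pA fA eA cG jn[rule_format]] that by blast
  then have "set ws \<subseteq> link_verts A v" using L2[OF eA] wsG lw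
    by (metis in_set_conv_nth subset_code(1))
  moreover have "set cs \<subseteq> link_edges A v" using L1(1)[OF pA fA eA] csG all by blast
  moreover have "joins A (cs ! i) (ws ! i) (ws ! (Suc i mod n))" if "i < n" for i
    using jn that L1(3)[OF pA fA eA cG] unfolding joins_def by auto
  ultimately show "link_cycle A v ws cs" using cyc n_def unfolding link_cycle_def by auto
  have "\<forall>c\<in>set cs. link_len G c = link_len A c" using L1(2)[OF pA fA eA] csG all by blast
  then show "link_length G cs = link_length A cs" unfolding link_length_def
    by (metis map_eq_conv)
  have c0: "cs ! 0 \<in> link_edges A v" using L1(1)[OF pA fA eA cG] n0 by blast
  obtain f k where fk: "cs ! 0 = (f, k)" by (cases "cs ! 0")
  then have "f \<in> faces A" "k < length (bdry A f)" "otail A (bdry A f ! k) = v"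
    using c0 unfolding link_edges_def by auto
  moreover then have "fst (bdry A f ! k) \<in> edges A" using bdry_edge[OF pA] by blast
  ultimately show "v \<in> verts A" using pA unfolding pe2_complex_def otail_def
    by (auto split: if_splits)
qed

lemma face_ok:
  fixes G A :: "('v,'e,'f) pe2"
  assumes pA: "pe2_complex A"
    and fA: "\<forall>f\<in>faces A. bdry G f = bdry A f \<and> shape G f = shape A f"
    and eA: "\<forall>e\<in>edges A. src G e = src A e \<and> tgt G e = tgt A e \<and> len G e = len A e"
    and sub: "edges A \<subseteq> edges G" and f: "f \<in> faces A"
  shows "let bs = bdry G f; ps = shape G f; n = length bs in
        length ps = n \<and> convex_polygon ps \<and>
        (\<forall>k < n. fst (bs ! k) \<in> edges G \<and>
                 ohead G (bs ! k) = otail G (bs ! (Suc k mod n)) \<and>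
                 cmod (ps ! (Suc k mod n) - ps ! k) = len G (fst (bs ! k)))"
proof -
  have F: "let bs = bdry A f; ps = shape A f; n = length bs in
        length ps = n \<and> convex_polygon ps \<and>
        (\<forall>k < n. fst (bs ! k) \<in> edges A \<and>
                 ohead A (bs ! k) = otail A (bs ! (Suc k mod n)) \<and>
                 cmod (ps ! (Suc k mod n) - ps ! k) = len A (fst (bs ! k)))"
    using pA f unfolding pe2_complex_def by auto
  have oh: "ohead G s = ohead A s" "otail G s = otail A s" if "fst s \<in> edges A" for s
    using eA that unfolding ohead_def otail_def by auto
  have "length (bdry A f) > 0" if "k < length (bdry A f)" for k using that by linarith
  then show ?thesis using F fA f sub eA oh unfolding Let_def
    by (auto simp del: mod_Suc)
qed

theorem lemma7p9:
  fixes X Y :: "('v,'e,'f) pe2" and ZV :: "'v set" and ZE :: "'e set"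
  assumes "npc X" and "npc Y"
    and "subcomplex1 X ZV ZE" and "subcomplex1 Y ZV ZE"
    and "\<forall>e \<in> ZE. src X e = src Y e \<and> tgt X e = tgt Y e \<and> len X e = len Y e"
    and "verts X \<inter> verts Y = ZV" and "edges X \<inter> edges Y = ZE" and "faces X \<inter> faces Y = {}"
    and "ultra_convex X ZV ZE \<or> ultra_convex Y ZV ZE"
  shows "npc (glue X Y)"
proof -
  define G where "G = glue X Y"
  have pX: "pe2_complex X" and pY: "pe2_complex Y" using assms(1,2) unfolding npc_def by auto
  have fX: "\<forall>f\<in>faces X. bdry G f = bdry X f \<and> shape G f = shape X f"
    unfolding G_def glue_def by simp
  have fY: "\<forall>f\<in>faces Y. bdry G f = bdry Y f \<and> shape G f = shape Y f"
    using assms(8) unfolding G_def glue_def by auto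
  have eX: "\<forall>e\<in>edges X. src G e = src X e \<and> tgt G e = tgt X e \<and> len G e = len X e"
    unfolding G_def glue_def by simp
  have eY: "\<forall>e\<in>edges Y. src G e = src Y e \<and> tgt G e = tgt Y e \<and> len G e = len Y e"
    using assms(5,7) unfolding G_def glue_def by auto
  have eX': "\<forall>e\<in>edges X. src G e = src X e \<and> tgt G e = tgt X e" using eX by blast
  have eY': "\<forall>e\<in>edges Y. src G e = src Y e \<and> tgt G e = tgt Y e" using eY by blast
  have vG: "verts G = verts X \<union> verts Y" and edG: "edges G = edges X \<union> edges Y"
    and faG: "faces G = faces X \<union> faces Y" unfolding G_def glue_def by simp_all
  have pG: "pe2_complex G"
    unfolding pe2_complex_def
  proof (intro conjI)
    show "faces G \<noteq> {}" using pX faG unfolding pe2_complex_def by auto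
    show "\<forall>e \<in> edges G. src G e \<in> verts G \<and> tgt G e \<in> verts G \<and> len G e > 0"
      using pX pY eX eY edG vG unfolding pe2_complex_def by auto
    show "\<forall>f \<in> faces G. let bs = bdry G f; ps = shape G f; n = length bs in
        length ps = n \<and> convex_polygon ps \<and>
        (\<forall>k < n. fst (bs ! k) \<in> edges G \<and>
                 ohead G (bs ! k) = otail G (bs ! (Suc k mod n)) \<and>
                 cmod (ps ! (Suc k mod n) - ps ! k) = len G (fst (bs ! k)))"
    proof
    fix f assume "f \<in> faces G"
    then show "let bs = bdry G f; ps = shape G f; n = length bs in
        length ps = n \<and> convex_polygon ps \<and>
        (\<forall>k < n. fst (bs ! k) \<in> edges G \<and>
                 ohead G (bs ! k) = otail G (bs ! (Suc k mod n)) \<and>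
                 cmod (ps ! (Suc k mod n) - ps ! k) = len G (fst (bs ! k)))"
      using face_ok[OF pX fX eX] face_ok[OF pY fY eY] edG faG by auto
    qed
  qed
  have "\<forall>v \<in> verts G. \<forall>ws cs. link_cycle G v ws cs \<longrightarrow> link_length G cs \<ge> 2 * pi"
  proof (intro ballI allI impI)
    fix v ws cs assume cyc: "link_cycle G v ws cs"
    have inG: "fst c \<in> faces X \<union> faces Y" if "c \<in> set cs" for c
      using cyc that faG unfolding link_cycle_def link_edges_def by auto
    show "link_length G cs \<ge> 2 * pi"
    proof (cases "\<forall>c\<in>set cs. fst c \<in> faces X")
      case True
      then show ?thesis using restrict[OF pX fX eX' cyc] assms(1) unfolding npc_def by auto
    next
      case nX: False
      show ?thesis
      proof (cases "\<forall>c\<in>set cs. fst c \<in> faces Y")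
        case True
        then show ?thesis using restrict[OF pY fY eY' cyc] assms(2) unfolding npc_def by auto
      next
        case False
        then have mX: "\<exists>c\<in>set cs. fst c \<in> faces X" using inG by blast
        have mY: "\<exists>c\<in>set cs. fst c \<in> faces Y" using nX inG by blast
        from assms(9) show ?thesis
        proof
          assume "ultra_convex X ZV ZE"
          then show ?thesis
            using key[OF pX pY fX eX' fY eY' assms(3) assms(7) faG assms(8) _ cyc mX mY] by simp
        next
          assume "ultra_convex Y ZV ZE"
          moreover have "edges Y \<inter> edges X = ZE" using assms(7) by blast
          moreover have "faces G = faces Y \<union> faces X" using faG by blast
          moreover have "faces Y \<inter> faces X = {}" using assms(8) by blast
          ultimately show ?thesis
            using key[OF pY pX fY eY' fX eX' assms(4) _ _ _ _ cyc mY mX] by simp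
        qed
      qed
    qed
  qed
  then show ?thesis using pG unfolding npc_def G_def by simp
qed

end
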